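(* Let $n\ge1$ and $a_0,a_1,b_0,b_1\in R$. The sections $s_0=a_0(x^n,z^n)^T+a_1(y^n,w^n)^T$ and $s_1=b_0(x^n,z^n)^T+b_1(y^n,w^n)^T$ generate $\mathcal{P}_n$ if and only if there exist $U_x,V_x,U_w,V_w\in R$ with $$U_x(x^na_0+y^na_1)+V_x(x^nb_0+y^nb_1)+U_w(z^na_0+w^na_1)+V_w(z^nb_0+w^nb_1)=1.$$ Similarly, the sections $s_0=a_0(x^n,y^n)^T+a_1(z^n,w^n)^T$ and $s_1=b_0(x^n,y^n)^T+b_1(z^n,w^n)^T$ generate $\mathcal{Q}_n$ if and only if there exist $U_x,V_x,U_w,V_w\in R$ with $$U_x(x^na_0+z^na_1)+V_x(x^nb_0+z^nb_1)+U_w(y^na_0+w^na_1)+V_w(y^nb_0+w^nb_1)=1.$$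
   Context: Let $k$ be a field and $R=k[x,y,z,w]/(x+w-1,\,xw-yz)$. For $n\ge1$ let $\mathcal{P}_n\subseteq R^2$ be the $R$-submodule generated by $(x^n,z^n)^T$ and $(y^n,w^n)^T$, and $\mathcal{Q}_n\subseteq R^2$ the submodule generated by $(x^n,y^n)^T$ and $(z^n,w^n)^T$. "Generate" means the two sections generate the $R$-module. *)

theory Defs
  imports "HOL-Computational_Algebra.Polynomial"
begin

text \<open>The polynomial ring k[x,y,z,w] is modelled as iterated univariate polynomials
  over the field 'a; the ring R = k[x,y,z,w]/(x+w-1, xw-yz) is handled through
  representatives in k[x,y,z,w] together with the congruence modulo the ideal
  generated by x+w-1 and xw-yz.\<close>

type_synonym 'a kxyzw = "'a poly poly poly poly"

definition varX :: "'a::field kxyzw" where "varX = [:[:[:monom 1 1:]:]:]"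
definition varY :: "'a::field kxyzw" where "varY = [:[:monom 1 1:]:]"
definition varZ :: "'a::field kxyzw" where "varZ = [:monom 1 1:]"
definition varW :: "'a::field kxyzw" where "varW = monom 1 1"

definition in_ideal_R :: "'a::field kxyzw \<Rightarrow> bool" where
  "in_ideal_R f \<longleftrightarrow> (\<exists>c1 c2. f = c1 * (varX + varW - 1) + c2 * (varX * varW - varY * varZ))"

definition eqR :: "'a::field kxyzw \<Rightarrow> 'a kxyzw \<Rightarrow> bool" where
  "eqR f g \<longleftrightarrow> in_ideal_R (f - g)"

definition in_span2 :: "'a::field kxyzw \<times> 'a kxyzw \<Rightarrow> 'a kxyzw \<times> 'a kxyzw \<Rightarrow> 'a kxyzw \<times> 'a kxyzw \<Rightarrow> bool" where
  "in_span2 v u u' \<longleftrightarrow> (\<exists>c d. eqR (fst v) (c * fst u + d * fst u') \<and> eqR (snd v) (c * snd u + d * snd u'))"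

definition generates2 :: "'a::field kxyzw \<times> 'a kxyzw \<Rightarrow> 'a kxyzw \<times> 'a kxyzw \<Rightarrow> 'a kxyzw \<times> 'a kxyzw \<Rightarrow> 'a kxyzw \<times> 'a kxyzw \<Rightarrow> bool" where
  "generates2 s0 s1 e1 e2 \<longleftrightarrow> (\<forall>v. in_span2 v s0 s1 \<longleftrightarrow> in_span2 v e1 e2)"

end

theory Submission
  imports Defs
begin

lemma I_add: "in_ideal_R f \<Longrightarrow> in_ideal_R g \<Longrightarrow> in_ideal_R (f + g)"
proof -
  assume "in_ideal_R f" "in_ideal_R g"
  then obtain c1 c2 d1 d2 where hf: "f = c1 * (varX + varW - 1) + c2 * (varX * varW - varY * varZ)"
    and hg: "g = d1 * (varX + varW - 1) + d2 * (varX * varW - varY * varZ)" unfolding in_ideal_R_def by blast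
  show ?thesis unfolding in_ideal_R_def hf hg
    by (intro exI[of _ "c1 + d1"] exI[of _ "c2 + d2"]) (simp add: algebra_simps)
qed

lemma I_mult: "in_ideal_R f \<Longrightarrow> in_ideal_R (h * f)"
proof -
  assume "in_ideal_R f"
  then obtain c1 c2 where hf: "f = c1 * (varX + varW - 1) + c2 * (varX * varW - varY * varZ)"
    unfolding in_ideal_R_def by blast
  show ?thesis unfolding in_ideal_R_def hf
    by (intro exI[of _ "h * c1"] exI[of _ "h * c2"]) (simp add: algebra_simps)
qed

lemma I_zero: "in_ideal_R 0"
  unfolding in_ideal_R_def by (rule exI[of _ 0], rule exI[of _ 0]) simp

lemma I_eq: "in_ideal_R f \<Longrightarrow> f = g \<Longrightarrow> in_ideal_R g" by simp

lemma I_neg: "in_ideal_R f \<Longrightarrow> in_ideal_R (- f)"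
  using I_mult[of f "-1"] by simp

lemma id_gen:
  fixes x w :: "'b::comm_ring_1"
  assumes "k \<ge> 1"
  shows "\<exists>A B c. A * x ^ k + B * w ^ k + c * (x + w - 1) = 1"
  using assms
proof (induction k rule: dec_induct)
  case base
  show ?case by (rule exI[of _ 1], rule exI[of _ 1], rule exI[of _ "-1"]) (simp add: algebra_simps)
next
  case (step k)
  then obtain A B c where h: "A * x ^ k + B * w ^ k + c * (x + w - 1) = 1" by blast
  define t where "t = x + w - 1"
  have kk: "k-1+(k+1) = k+k" using step(1) by simp
  have e1: "x^(k-1) * x^(k+1) = x^k * x^k" unfolding power_add[symmetric] kk ..
  have e2: "w^(k-1) * w^(k+1) = w^k * w^k" unfolding power_add[symmetric] kk ..
  have e3: "x^(k+1)*w^k + x^k*w^(k+1) - x^k*w^k*t = x^k*w^k"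
    unfolding t_def by (simp add: algebra_simps)
  have "(A*A*x^(k-1) + 2*A*B*w^k) * x^(Suc k) + (B*B*w^(k-1) + 2*A*B*x^k) * w^(Suc k)
     + (- 2*A*B*x^k*w^k + 2*c*(A * x ^ k + B * w ^ k) + c*c*t) * t
     = (A*A)*(x^(k-1) * x^(k+1)) + (B*B)*(w^(k-1) * w^(k+1))
       + 2*A*B*(x^(k+1)*w^k + x^k*w^(k+1) - x^k*w^k*t) + (2*c*(A * x ^ k + B * w ^ k) + c*c*t) * t"
    by (simp add: algebra_simps)
  also have "\<dots> = (A * x ^ k + B * w ^ k + c * t)^2"
    unfolding e1 e2 e3 power2_eq_square by (simp add: algebra_simps)
  also have "\<dots> = 1" using h t_def by simp
  finally show ?case unfolding t_def by blast
qed


lemma I_comb: "in_ideal_R f \<Longrightarrow> in_ideal_R g \<Longrightarrow> h1 * f + h2 * g = k \<Longrightarrow> in_ideal_R k"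
  using I_add[OF I_mult[of f h1] I_mult[of g h2]] by simp

lemma I_comb3: "in_ideal_R f \<Longrightarrow> in_ideal_R g \<Longrightarrow> in_ideal_R e \<Longrightarrow> h1 * f + h2 * g + h3 * e = k \<Longrightarrow> in_ideal_R k"
  using I_add[OF I_add[OF I_mult[of f h1] I_mult[of g h2]] I_mult[of e h3]] by simp

lemma span_trans:
  assumes "in_span2 u1 e1 e2" "in_span2 u2 e1 e2" "in_span2 v u1 u2"
  shows "in_span2 v e1 e2"
proof -
  obtain c1 d1 where h1: "in_ideal_R (fst u1 - (c1 * fst e1 + d1 * fst e2))" "in_ideal_R (snd u1 - (c1 * snd e1 + d1 * snd e2))"
    using assms(1) unfolding in_span2_def eqR_def by blast
  obtain c2 d2 where h2: "in_ideal_R (fst u2 - (c2 * fst e1 + d2 * fst e2))" "in_ideal_R (snd u2 - (c2 * snd e1 + d2 * snd e2))"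
    using assms(2) unfolding in_span2_def eqR_def by blast
  obtain c d where h: "in_ideal_R (fst v - (c * fst u1 + d * fst u2))" "in_ideal_R (snd v - (c * snd u1 + d * snd u2))"
    using assms(3) unfolding in_span2_def eqR_def by blast
  have "in_ideal_R (fst v - ((c*c1 + d*c2) * fst e1 + (c*d1 + d*d2) * fst e2))"
    by (rule I_comb3[OF h(1) h1(1) h2(1), of 1 c d]) (simp add: algebra_simps)
  moreover have "in_ideal_R (snd v - ((c*c1 + d*c2) * snd e1 + (c*d1 + d*d2) * snd e2))"
    by (rule I_comb3[OF h(2) h1(2) h2(2), of 1 c d]) (simp add: algebra_simps)
  ultimately show ?thesis unfolding in_span2_def eqR_def by blast
qed

lemma span_self1: "in_span2 u u u'"
  unfolding in_span2_def eqR_def by (rule exI[of _ 1], rule exI[of _ 0]) (simp add: I_zero)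

lemma span_self2: "in_span2 u' u u'"
  unfolding in_span2_def eqR_def by (rule exI[of _ 0], rule exI[of _ 1]) (simp add: I_zero)

lemma gen_iff:
  assumes "in_span2 s0 e1 e2" "in_span2 s1 e1 e2"
  shows "generates2 s0 s1 e1 e2 \<longleftrightarrow> in_span2 e1 s0 s1 \<and> in_span2 e2 s0 s1"
proof
  assume G: "generates2 s0 s1 e1 e2"
  have "in_span2 e1 s0 s1" using G span_self1[of e1 e2] unfolding generates2_def by blast
  moreover have "in_span2 e2 s0 s1" using G span_self2[of e2 e1] unfolding generates2_def by blast
  ultimately show "in_span2 e1 s0 s1 \<and> in_span2 e2 s0 s1" by (rule conjI)
next
  assume H: "in_span2 e1 s0 s1 \<and> in_span2 e2 s0 s1"
  show "generates2 s0 s1 e1 e2" unfolding generates2_def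
  proof (intro allI iffI)
    fix v assume "in_span2 v s0 s1"
    then show "in_span2 v e1 e2" by (rule span_trans[OF assms])
  next
    fix v assume "in_span2 v e1 e2"
    then show "in_span2 v s0 s1" by (rule span_trans[OF conjunct1[OF H] conjunct2[OF H]])
  qed
qed

lemma main:
  fixes p q r s a0 a1 b0 b1 :: "'a::field kxyzw"
  assumes D: "in_ideal_R (p*s - q*r)" and AB: "in_ideal_R (A*p + B*s - 1)"
  shows "generates2 (a0*p + a1*q, a0*r + a1*s) (b0*p+b1*q, b0*r+b1*s) (p,r) (q,s) \<longleftrightarrow>
    (\<exists>Ux Vx Uw Vw. eqR (Ux*(p*a0+q*a1) + Vx*(p*b0+q*b1) + Uw*(r*a0+s*a1) + Vw*(r*b0+s*b1)) 1)"
proof -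
  have s0: "in_span2 (a0*p + a1*q, a0*r + a1*s) (p,r) (q,s)"
    unfolding in_span2_def eqR_def by (rule exI[of _ a0], rule exI[of _ a1]) (simp add: I_zero)
  have s1: "in_span2 (b0*p + b1*q, b0*r + b1*s) (p,r) (q,s)"
    unfolding in_span2_def eqR_def by (rule exI[of _ b0], rule exI[of _ b1]) (simp add: I_zero)
  show ?thesis unfolding gen_iff[OF s0 s1]
  proof
    assume H: "in_span2 (p, r) (a0 * p + a1 * q, a0 * r + a1 * s) (b0 * p + b1 * q, b0 * r + b1 * s) \<and>
      in_span2 (q, s) (a0 * p + a1 * q, a0 * r + a1 * s) (b0 * p + b1 * q, b0 * r + b1 * s)"
    obtain c d where
      h1: "in_ideal_R (p - (c * (a0 * p + a1 * q) + d * (b0 * p + b1 * q)))"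
      using conjunct1[OF H] unfolding in_span2_def eqR_def fst_conv snd_conv by blast
    obtain c' d' where
      h2: "in_ideal_R (s - (c' * (a0 * r + a1 * s) + d' * (b0 * r + b1 * s)))"
      using conjunct2[OF H] unfolding in_span2_def eqR_def fst_conv snd_conv by blast
    have "eqR ((A*c)*(p*a0+q*a1) + (A*d)*(p*b0+q*b1) + (B*c')*(r*a0+s*a1) + (B*d')*(r*b0+s*b1)) 1"
      unfolding eqR_def
      by (rule I_comb3[OF h1 h2 AB, of "-A" "-B" 1]) (simp add: algebra_simps)
    then show "\<exists>Ux Vx Uw Vw. eqR (Ux*(p*a0+q*a1) + Vx*(p*b0+q*b1) + Uw*(r*a0+s*a1) + Vw*(r*b0+s*b1)) 1"
      by blast
  next
    assume "\<exists>Ux Vx Uw Vw. eqR (Ux*(p*a0+q*a1) + Vx*(p*b0+q*b1) + Uw*(r*a0+s*a1) + Vw*(r*b0+s*b1)) 1"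
    then obtain Ux Vx Uw Vw where T: "in_ideal_R (Ux*(p*a0+q*a1) + Vx*(p*b0+q*b1) + Uw*(r*a0+s*a1) + Vw*(r*b0+s*b1) - 1)"
      unfolding eqR_def by blast
    have i1: "in_ideal_R (p - ((Ux*p + Uw*r) * (a0 * p + a1 * q) + (Vx*p + Vw*r) * (b0 * p + b1 * q)))"
      by (rule I_comb[OF T D, of "-p" "a1*Uw+b1*Vw"]) (simp add: algebra_simps)
    have i2: "in_ideal_R (r - ((Ux*p + Uw*r) * (a0 * r + a1 * s) + (Vx*p + Vw*r) * (b0 * r + b1 * s)))"
      by (rule I_comb[OF T D, of "-r" "-(a1*Ux+b1*Vx)"]) (simp add: algebra_simps)
    have i3: "in_ideal_R (q - ((Ux*q + Uw*s) * (a0 * p + a1 * q) + (Vx*q + Vw*s) * (b0 * p + b1 * q)))"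
      by (rule I_comb[OF T D, of "-q" "-(a0*Uw+b0*Vw)"]) (simp add: algebra_simps)
    have i4: "in_ideal_R (s - ((Ux*q + Uw*s) * (a0 * r + a1 * s) + (Vx*q + Vw*s) * (b0 * r + b1 * s)))"
      by (rule I_comb[OF T D, of "-s" "a0*Ux+b0*Vx"]) (simp add: algebra_simps)
    have j1: "in_span2 (p, r) (a0 * p + a1 * q, a0 * r + a1 * s) (b0 * p + b1 * q, b0 * r + b1 * s)"
      unfolding in_span2_def eqR_def fst_conv snd_conv
      by (rule exI[of _ "Ux*p + Uw*r"], rule exI[of _ "Vx*p + Vw*r"], rule conjI[OF i1 i2])
    have j2: "in_span2 (q, s) (a0 * p + a1 * q, a0 * r + a1 * s) (b0 * p + b1 * q, b0 * r + b1 * s)"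
      unfolding in_span2_def eqR_def fst_conv snd_conv
      by (rule exI[of _ "Ux*q + Uw*s"], rule exI[of _ "Vx*q + Vw*s"], rule conjI[OF i3 i4])
    show "in_span2 (p, r) (a0 * p + a1 * q, a0 * r + a1 * s) (b0 * p + b1 * q, b0 * r + b1 * s) \<and>
      in_span2 (q, s) (a0 * p + a1 * q, a0 * r + a1 * s) (b0 * p + b1 * q, b0 * r + b1 * s)"
      using j1 j2 by (rule conjI)
  qed
qed

lemma I_gen1: "in_ideal_R (varX * varW - varY * varZ)"
  unfolding in_ideal_R_def by (rule exI[of _ 0], rule exI[of _ 1]) simp

lemma I_det: "in_ideal_R (varX^n * varW^n - varY^n * varZ^n)"
proof -
  have "varX^n * varW^n - varY^n * varZ^n = (varX * varW)^n - (varY * varZ)^n"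
    by (simp add: power_mult_distrib)
  also have "\<dots> = (varX * varW - varY * varZ) * (\<Sum>i<n. (varY * varZ)^(n - Suc i) * (varX * varW)^i)"
    by (rule power_diff_sumr2)
  finally have calc: "varX^n * varW^n - varY^n * varZ^n = (varX * varW - varY * varZ) * (\<Sum>i<n. (varY * varZ)^(n - Suc i) * (varX * varW)^i)" .
  have h: "in_ideal_R ((\<Sum>i<n. (varY * varZ)^(n - Suc i) * (varX * varW)^i) * (varX * varW - varY * varZ))"
    by (rule I_mult[OF I_gen1])
  have e: "(\<Sum>i<n. (varY * varZ)^(n - Suc i) * (varX * varW)^i) * (varX * varW - varY * varZ) = varX^n * varW^n - varY^n * varZ^n"
    unfolding calc by (rule mult.commute)
  show ?thesis by (rule I_eq[OF h e])
qed

lemma I_det': "in_ideal_R (varX^n * varW^n - varZ^n * varY^n)"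
  using I_det by (simp add: mult.commute)

lemma I_AB:
  assumes "n \<ge> 1"
  shows "\<exists>A B. in_ideal_R (A * varX^n + B * varW^n - 1)"
proof -
  obtain A B c where h: "A * varX ^ n + B * varW ^ n + c * (varX + varW - 1) = (1::'a::field kxyzw)"
    using id_gen[OF assms] by blast
  have "in_ideal_R (A * varX^n + B * varW^n - 1)"
    unfolding in_ideal_R_def
    by (rule exI[of _ "-c"], rule exI[of _ 0]) (use h in \<open>simp add: algebra_simps\<close>)
  then show ?thesis by blast
qed

theorem proposition2p26:
  fixes n :: nat and a0 a1 b0 b1 :: "'a::field kxyzw"
  assumes "n \<ge> 1"
  shows "(generates2
            (a0 * varX ^ n + a1 * varY ^ n, a0 * varZ ^ n + a1 * varW ^ n)
            (b0 * varX ^ n + b1 * varY ^ n, b0 * varZ ^ n + b1 * varW ^ n)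
            (varX ^ n, varZ ^ n) (varY ^ n, varW ^ n)
         \<longleftrightarrow> (\<exists>Ux Vx Uw Vw. eqR
                (Ux * (varX ^ n * a0 + varY ^ n * a1) + Vx * (varX ^ n * b0 + varY ^ n * b1)
                 + Uw * (varZ ^ n * a0 + varW ^ n * a1) + Vw * (varZ ^ n * b0 + varW ^ n * b1)) 1))
       \<and> (generates2
            (a0 * varX ^ n + a1 * varZ ^ n, a0 * varY ^ n + a1 * varW ^ n)
            (b0 * varX ^ n + b1 * varZ ^ n, b0 * varY ^ n + b1 * varW ^ n)
            (varX ^ n, varY ^ n) (varZ ^ n, varW ^ n)
         \<longleftrightarrow> (\<exists>Ux Vx Uw Vw. eqR
                (Ux * (varX ^ n * a0 + varZ ^ n * a1) + Vx * (varX ^ n * b0 + varZ ^ n * b1)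
                 + Uw * (varY ^ n * a0 + varW ^ n * a1) + Vw * (varY ^ n * b0 + varW ^ n * b1)) 1))"
  proof -
  obtain A B where AB: "in_ideal_R (A * varX^n + B * varW^n - (1::'a kxyzw))"
    using I_AB[OF assms] by blast
  show ?thesis
    by (intro conjI main[OF I_det AB] main[OF I_det' AB])
qed

end
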